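(* Let $X$ be a Banach space, $D\subset X$ closed, bounded and convex, and $\tau$ a locally convex topology on $D$ containing the relative weak topology of $D$. Let $C$ be a convex subset of $D$, $\varepsilon>0$, $n,k\in\mathbb{N}$ and $\{x_1,\dots,x_k\}\subset X$. If $(\widetilde O_i)_{i=1}^n$ are nonempty sets in $\tau|_C$, then there is another $n$-tuple $(O_i)_{i=1}^n$ of nonempty $\tau|_C$-open sets with $O_i\subset\widetilde O_i$ such that $$\operatorname{diam}\Big(\sum_{i=1}^n\lambda(i)O_i\Big)\le 2\,d\Big(\{x_1,\dots,x_k\},\sum_{i=1}^n\lambda(i)O_i\Big)+\varepsilon\quad\text{for all }\lambda\in S^+_{\ell_1^n}.$$
   Context: $\tau|_C$ is the topology induced by $\tau$ on $C$; locally convex means having a basis of convex open sets. $S^+_{\ell_1^n}=\{\lambda\in\mathbb{R}^n:\lambda(i)\ge0,\ \sum_i\lambda(i)=1\}$. Sums of sets are Minkowski sums and $d(A,B)=\inf\{\|a-b\|:a\in A,b\in B\}$. *)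

theory Defs
  imports "HOL-Analysis.Analysis"
begin

definition weak_topology :: "('a::real_normed_vector) topology" where
  "weak_topology = topology_generated_by
     {{x. f x \<in> U} | f U. bounded_linear (f :: 'a \<Rightarrow> real) \<and> open U}"

definition locally_convex_topology :: "('a::real_vector) topology \<Rightarrow> bool" where
  "locally_convex_topology T \<longleftrightarrow>
     (\<forall>U x. openin T U \<and> x \<in> U \<longrightarrow> (\<exists>V. openin T V \<and> convex V \<and> x \<in> V \<and> V \<subseteq> U))"

definition scaled_msum :: "nat \<Rightarrow> (nat \<Rightarrow> real) \<Rightarrow> (nat \<Rightarrow> 'a::real_vector set) \<Rightarrow> 'a set" where
  "scaled_msum n lam Os =
     {(\<Sum>i\<in>{1..n}. lam i *\<^sub>R y i) | y. \<forall>i\<in>{1..n}. y i \<in> Os i}"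

text \<open>Positive part of the unit sphere of l_1^n (the standard simplex).\<close>
definition simplex_pos :: "nat \<Rightarrow> (nat \<Rightarrow> real) set" where
  "simplex_pos n = {lam. (\<forall>i\<in>{1..n}. 0 \<le> lam i) \<and> (\<Sum>i\<in>{1..n}. lam i) = 1}"

end

theory Submission
  imports Defs
begin


definition hb_ok :: "'a::real_normed_vector \<Rightarrow> ('a \<times> real) set \<Rightarrow> bool" where
  "hb_ok v G \<longleftrightarrow> (0,0) \<in> G \<and> (\<forall>x a y b. (x,a)\<in>G \<longrightarrow> (y,b)\<in>G \<longrightarrow> (x+y,a+b)\<in>G)
    \<and> (\<forall>c x a. (x,a)\<in>G \<longrightarrow> (c*\<^sub>R x, c*a)\<in>G)
    \<and> (\<forall>x a b. (x,a)\<in>G \<longrightarrow> (x,b)\<in>G \<longrightarrow> a=b)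
    \<and> (\<forall>x a. (x,a)\<in>G \<longrightarrow> a \<le> norm x) \<and> (v, norm v) \<in> G"

lemma hb_okD:
  assumes "hb_ok v G"
  shows "(0,0) \<in> G" "\<And>x a y b. (x,a)\<in>G \<Longrightarrow> (y,b)\<in>G \<Longrightarrow> (x+y,a+b)\<in>G"
    "\<And>c x a. (x,a)\<in>G \<Longrightarrow> (c*\<^sub>R x, c*a)\<in>G"
    "\<And>x a b. (x,a)\<in>G \<Longrightarrow> (x,b)\<in>G \<Longrightarrow> a=b"
    "\<And>x a. (x,a)\<in>G \<Longrightarrow> a \<le> norm x" "(v, norm v) \<in> G"
  using assms unfolding hb_ok_def by blast+

lemma hb_init: "hb_ok v ((\<lambda>t. (t *\<^sub>R v, t * norm v)) ` UNIV)"
proof -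
  define G0 where "G0 = ((\<lambda>t. (t *\<^sub>R v, t * norm v)) ` UNIV)"
  have mem: "(t *\<^sub>R v, t * norm v) \<in> G0" for t unfolding G0_def by blast
  have fn0: "a = b" if "(x,a) = (t *\<^sub>R v, t * norm v)" "(x,b) = (t' *\<^sub>R v, t' * norm v)" for x a b t t'
  proof -
    from that
    show ?thesis by (cases "v = 0") (auto simp: scaleR_cancel_right)
  qed
  have dm: "t * norm v \<le> norm (t *\<^sub>R v)" for t
    by (simp add: mult_right_mono)
  have "hb_ok v G0" unfolding hb_ok_def
  proof (intro conjI allI impI)
    show "(0,0) \<in> G0" using mem[of 0] by simp
    show "(v, norm v) \<in> G0" using mem[of 1] by simp
  next
    fix x a y b assume "(x,a)\<in>G0" "(y,b)\<in>G0"
    then obtain t t' where "(x,a) = (t*\<^sub>R v, t*norm v)" "(y,b) = (t'*\<^sub>R v, t'*norm v)"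
      unfolding G0_def by blast
    thus "(x+y, a+b) \<in> G0" using mem[of "t+t'"] by (simp add: scaleR_left_distrib distrib_right)
  next
    fix c x a assume "(x,a)\<in>G0"
    then obtain t where "(x,a) = (t*\<^sub>R v, t*norm v)" unfolding G0_def by blast
    thus "(c *\<^sub>R x, c*a) \<in> G0" using mem[of "c*t"] by (simp add: mult.assoc)
  next
    fix x a b assume "(x,a)\<in>G0" "(x,b)\<in>G0"
    then obtain t t' where "(x,a) = (t*\<^sub>R v, t*norm v)" "(x,b) = (t'*\<^sub>R v, t'*norm v)"
      unfolding G0_def by blast
    thus "a = b" using fn0 by blast
  next
    fix x a assume "(x,a)\<in>G0"
    then obtain t where "(x,a) = (t*\<^sub>R v, t*norm v)" unfolding G0_def by blast
    thus "a \<le> norm x" using dm[of t] by simp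
  qed
  thus ?thesis unfolding G0_def .
qed

lemma hb_chain:
  assumes "C \<in> chains {G. hb_ok v G}" "C \<noteq> {}"
  shows "hb_ok v (\<Union>C)"
proof -
  have ch: "\<forall>G\<in>C. hb_ok v G" and cc: "\<forall>G\<in>C. \<forall>H\<in>C. G \<subseteq> H \<or> H \<subseteq> G"
    using assms(1) by (auto simp: chains_def chain_subset_def)
  have two: "\<exists>H\<in>C. p \<in> H \<and> q \<in> H" if "p \<in> \<Union>C" "q \<in> \<Union>C" for p q
    using that cc by blast
  obtain G0 where "G0 \<in> C" using assms(2) by blast
  show ?thesis unfolding hb_ok_def
  proof (intro conjI allI impI)
    show "(0,0) \<in> \<Union>C" using hb_okD(1) ch \<open>G0 \<in> C\<close> by blast
    show "(v, norm v) \<in> \<Union>C" using hb_okD(6) ch \<open>G0 \<in> C\<close> by blast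
    fix x a y b assume "(x,a) \<in> \<Union>C" "(y,b) \<in> \<Union>C"
    then obtain H where "H \<in> C" "(x,a) \<in> H" "(y,b) \<in> H" using two by blast
    then show "(x+y,a+b) \<in> \<Union>C" using hb_okD(2) ch by blast
  next
    fix c x a assume "(x,a) \<in> \<Union>C"
    then show "(c*\<^sub>R x, c*a) \<in> \<Union>C" using hb_okD(3) ch by blast
  next
    fix x a b assume "(x,a) \<in> \<Union>C" "(x,b) \<in> \<Union>C"
    then obtain H where "H \<in> C" "(x,a) \<in> H" "(x,b) \<in> H" using two by blast
    then show "a = b" using hb_okD(4) ch by blast
  next
    fix x a assume "(x,a) \<in> \<Union>C"
    then show "a \<le> norm x" using hb_okD(5) ch by blast
  qed
qed

lemma hb_extend:
  assumes G: "hb_ok v G" and x0: "x0 \<notin> fst ` G"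
  shows "\<exists>G'. hb_ok v G' \<and> G \<subseteq> G' \<and> G' \<noteq> G"
proof -
  have z: "(0,0) \<in> G" and add: "\<And>x a y b. (x,a)\<in>G \<Longrightarrow> (y,b)\<in>G \<Longrightarrow> (x+y,a+b)\<in>G"
    and sc: "\<And>c x a. (x,a)\<in>G \<Longrightarrow> (c*\<^sub>R x, c*a)\<in>G"
    and fn: "\<And>x a b. (x,a)\<in>G \<Longrightarrow> (x,b)\<in>G \<Longrightarrow> a=b"
    and dm: "\<And>x a. (x,a)\<in>G \<Longrightarrow> a \<le> norm x" and vv: "(v, norm v) \<in> G"
    using hb_okD[OF G] by blast+
  define Sx where "Sx = {a - norm (m - x0) | m a. (m,a) \<in> G}"
  have key: "a - norm (m - x0) \<le> norm (m' + x0) - a'" if "(m,a)\<in>G" "(m',a')\<in>G" for m a m' a'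
  proof -
    have "a + a' \<le> norm (m + m')" using dm[OF add[OF that]] .
    also have "\<dots> = norm ((m - x0) + (m' + x0))" by simp
    also have "\<dots> \<le> norm (m - x0) + norm (m' + x0)" by (rule norm_triangle_ineq)
    finally show ?thesis by simp
  qed
  define c where "c = Sup Sx"
  have ne: "Sx \<noteq> {}" using z unfolding Sx_def by blast
  have bdd: "bdd_above Sx" unfolding Sx_def bdd_above_def
    using key[OF _ z] by auto
  have c1: "a - norm (m - x0) \<le> c" if "(m,a)\<in>G" for m a
    unfolding c_def by (rule cSup_upper[OF _ bdd]) (use that Sx_def in blast)
  have c2: "c \<le> norm (m' + x0) - a'" if "(m',a')\<in>G" for m' a'
    unfolding c_def by (rule cSup_least[OF ne]) (use key that Sx_def in blast)
  define G' where "G' = {(m + t *\<^sub>R x0, a + t * c) | m a t. (m,a) \<in> G}"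
  have memG': "(m + t *\<^sub>R x0, a + t*c) \<in> G'" if "(m,a)\<in>G" for m a t
    unfolding G'_def using that by blast
  have GG': "G \<subseteq> G'"
  proof
    fix p assume "p \<in> G"
    then obtain m a where "p = (m,a)" "(m,a) \<in> G" by (cases p) auto
    thus "p \<in> G'" using memG'[of m a 0] by simp
  qed
  have new: "(x0, c) \<in> G'" using memG'[OF z, of 1] by simp
  have notold: "(x0, c) \<notin> G" using x0 by force
  have "hb_ok v G'" unfolding hb_ok_def
  proof (intro conjI allI impI)
    show "(0,0) \<in> G'" using GG' z by blast
    show "(v, norm v) \<in> G'" using GG' vv by blast
  next
    fix x a y b assume "(x,a) \<in> G'" "(y,b) \<in> G'"
    then obtain m1 a1 t1 m2 a2 t2 where "(m1,a1)\<in>G" "(m2,a2)\<in>G" "x = m1 + t1 *\<^sub>R x0" "a = a1 + t1*c"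
      "y = m2 + t2 *\<^sub>R x0" "b = a2 + t2*c" unfolding G'_def by blast
    then show "(x+y,a+b) \<in> G'" using memG'[OF add, of m1 a1 m2 a2 "t1+t2"]
      by (simp add: algebra_simps)
  next
    fix r x a assume "(x,a) \<in> G'"
    then obtain m1 a1 t1 where "(m1,a1)\<in>G" "x = m1 + t1 *\<^sub>R x0" "a = a1 + t1*c"
      unfolding G'_def by blast
    then show "(r*\<^sub>R x, r*a) \<in> G'" using memG'[OF sc, of m1 a1 r "r*t1"]
      by (simp add: algebra_simps)
  next
    fix x a b assume "(x,a) \<in> G'" "(x,b) \<in> G'"
    then obtain m1 a1 t1 m2 a2 t2 where h: "(m1,a1)\<in>G" "(m2,a2)\<in>G" "x = m1 + t1 *\<^sub>R x0" "a = a1 + t1*c"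
      "x = m2 + t2 *\<^sub>R x0" "b = a2 + t2*c" unfolding G'_def by blast
    have "t1 = t2"
    proof (rule ccontr)
      assume ne: "t1 \<noteq> t2"
      have "(t2 - t1) *\<^sub>R x0 = m1 - m2" using h(3,5) by (simp add: algebra_simps)
      hence "(1/(t2-t1)) *\<^sub>R ((t2 - t1) *\<^sub>R x0) = (1/(t2-t1)) *\<^sub>R (m1 - m2)" by simp
      hence xeq: "x0 = (1/(t2-t1)) *\<^sub>R (m1 + (-1) *\<^sub>R m2)" using ne by simp
      have mem: "(m1 + (-1) *\<^sub>R m2, a1 + (-1)*a2) \<in> G" using h(1,2) add sc by blast
      have "(x0, (1/(t2-t1)) * (a1 + (-1)*a2)) \<in> G" unfolding xeq by (rule sc[OF mem])
      thus False using x0 by force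
    qed
    with h have "m1 = m2" by simp
    with h \<open>t1 = t2\<close> fn show "a = b" by simp
  next
    fix x a assume "(x,a) \<in> G'"
    then obtain m a1 t where h: "(m,a1)\<in>G" "x = m + t *\<^sub>R x0" "a = a1 + t*c"
      unfolding G'_def by blast
    show "a \<le> norm x"
    proof (cases "t > 0")
      case True
      have "c \<le> norm ((1/t) *\<^sub>R m + x0) - (1/t)*a1" using c2 sc[OF h(1)] by blast
      hence "t * c \<le> t * norm ((1/t) *\<^sub>R m + x0) - a1" using True
        by (simp add: field_simps)
      also have "t * norm ((1/t) *\<^sub>R m + x0) = norm (m + t *\<^sub>R x0)"
      proof -
        have "t * norm ((1/t) *\<^sub>R m + x0) = norm (t *\<^sub>R ((1/t) *\<^sub>R m + x0))" using True by simp
        also have "t *\<^sub>R ((1/t) *\<^sub>R m + x0) = m + t *\<^sub>R x0" using True by (simp add: scaleR_add_right)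
        finally show ?thesis .
      qed
      finally show ?thesis using h by simp
    next
      case False
      show ?thesis
      proof (cases "t = 0")
        case True thus ?thesis using h dm by simp
      next
        case False
        define s where "s = -t"
        have sp: "s > 0" using False \<open>\<not> t > 0\<close> s_def by simp
        have "(1/s)*a1 - norm ((1/s) *\<^sub>R m - x0) \<le> c" using c1 sc[OF h(1)] by blast
        hence "a1 - s * norm ((1/s) *\<^sub>R m - x0) \<le> s * c" using sp
          by (simp add: field_simps)
        also have "s * norm ((1/s) *\<^sub>R m - x0) = norm (m + t *\<^sub>R x0)"
        proof -
          have "s * norm ((1/s) *\<^sub>R m - x0) = norm (s *\<^sub>R ((1/s) *\<^sub>R m - x0))" using sp by simp
          also have "s *\<^sub>R ((1/s) *\<^sub>R m - x0) = m + t *\<^sub>R x0" using sp s_def by (simp add: scaleR_diff_right)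
          finally show ?thesis .
        qed
        finally show ?thesis using h s_def by (simp add: algebra_simps)
      qed
    qed
  qed
  thus ?thesis using GG' new notold by blast
qed

lemma hahn_banach_norming:
  fixes v :: "'a::real_normed_vector"
  shows "\<exists>f. bounded_linear f \<and> (\<forall>x. \<bar>f x\<bar> \<le> norm x) \<and> f v = norm v"
proof -
  have "\<exists>M\<in>{G. hb_ok v G}. \<forall>X\<in>{G. hb_ok v G}. M \<subseteq> X \<longrightarrow> X = M"
  proof (rule Zorn_Lemma2, intro ballI)
    fix C assume C: "C \<in> chains {G. hb_ok v G}"
    show "\<exists>U\<in>{G. hb_ok v G}. \<forall>X\<in>C. X \<subseteq> U"
    proof (cases "C = {}")
      case True thus ?thesis using hb_init by blast
    next
      case False thus ?thesis using hb_chain[OF C False] by blast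
    qed
  qed
  then obtain G where G: "hb_ok v G" and mx: "\<And>X. hb_ok v X \<Longrightarrow> G \<subseteq> X \<Longrightarrow> X = G" by blast
  have all: "x \<in> fst ` G" for x
    using hb_extend[OF G, of x] mx by blast
  note fn = hb_okD(4)[OF G]
  define f where "f x = (THE a. (x,a) \<in> G)" for x
  have fe: "f x = a" if "(x,a) \<in> G" for x a
    unfolding f_def by (rule the_equality) (use that fn in blast)+
  have fG: "(x, f x) \<in> G" for x
  proof -
    obtain a where "(x,a) \<in> G" using all[of x] by force
    thus ?thesis using fe by simp
  qed
  have add: "f (x+y) = f x + f y" for x y
    using fe[OF hb_okD(2)[OF G fG fG]] .
  have sc: "f (r *\<^sub>R x) = r * f x" for r x
    using fe[OF hb_okD(3)[OF G fG]] .
  have le: "f x \<le> norm x" for x using hb_okD(5)[OF G fG] .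
  have ab: "\<bar>f x\<bar> \<le> norm x" for x
    using le[of x] le[of "-x"] sc[of "-1" x] by auto
  have "bounded_linear f"
    by (rule bounded_linear_intro[where K=1]) (use add sc ab in auto)
  moreover have "f v = norm v" using fe[OF hb_okD(6)[OF G]] .
  ultimately show ?thesis using ab by blast
qed



lemma key:
  fixes T :: "'a::real_normed_vector topology"
  assumes fin: "finite I"
    and Tf: "\<And>(f::'a\<Rightarrow>real) U. bounded_linear f \<Longrightarrow> open U \<Longrightarrow> openin T {x\<in>C. f x \<in> U}"
    and TC: "\<And>S. openin T S \<Longrightarrow> S \<subseteq> C"
    and B: "\<And>y. y \<in> C \<Longrightarrow> norm y \<le> B"
    and Q: "\<And>i. i\<in>I \<Longrightarrow> openin T (Q i) \<and> Q i \<noteq> {}"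
    and dp: "\<delta> > 0"
  shows "\<exists>Q'. (\<forall>i\<in>I. openin T (Q' i) \<and> Q' i \<noteq> {} \<and> Q' i \<subseteq> Q i) \<and>
     (\<exists>s. \<forall>y. (\<forall>i\<in>I. y i \<in> Q' i) \<longrightarrow>
        s - \<delta> \<le> norm ((\<Sum>i\<in>I. lam i *\<^sub>R y i) - p) \<and> norm ((\<Sum>i\<in>I. lam i *\<^sub>R y i) - p) \<le> s)"
proof -
  define L where "L = (\<Sum>i\<in>I. \<bar>lam i\<bar>)"
  have L0: "L \<ge> 0" unfolding L_def by (simp add: sum_nonneg)
  define A where "A = {norm ((\<Sum>i\<in>I. lam i *\<^sub>R y i) - p) | y. \<forall>i\<in>I. y i \<in> Q i}"
  have "\<forall>i\<in>I. (SOME z. z \<in> Q i) \<in> Q i" using Q by (simp add: some_in_eq)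
  hence "\<exists>y. \<forall>i\<in>I. y i \<in> Q i" by (rule exI[of _ "\<lambda>i. SOME z. z \<in> Q i"])
  then obtain y0 where y0: "\<forall>i\<in>I. y0 i \<in> Q i" by blast
  have "norm ((\<Sum>i\<in>I. lam i *\<^sub>R y0 i) - p) \<in> A" unfolding A_def using y0 by blast
  hence Ane: "A \<noteq> {}" by blast
  have bnd: "norm ((\<Sum>i\<in>I. lam i *\<^sub>R y i) - p) \<le> L * B + norm p" if "\<forall>i\<in>I. y i \<in> Q i" for y
  proof -
    have "norm ((\<Sum>i\<in>I. lam i *\<^sub>R y i) - p) \<le> norm (\<Sum>i\<in>I. lam i *\<^sub>R y i) + norm p"
      by (rule norm_triangle_ineq4)
    also have "norm (\<Sum>i\<in>I. lam i *\<^sub>R y i) \<le> (\<Sum>i\<in>I. norm (lam i *\<^sub>R y i))" by (rule norm_sum)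
    also have "\<dots> \<le> (\<Sum>i\<in>I. \<bar>lam i\<bar> * B)"
    proof (rule sum_mono)
      fix i assume "i \<in> I"
      hence "y i \<in> C" using that TC Q by blast
      thus "norm (lam i *\<^sub>R y i) \<le> \<bar>lam i\<bar> * B" using B by (simp add: mult_left_mono)
    qed
    also have "\<dots> = L * B" unfolding L_def by (simp add: sum_distrib_right)
    finally show ?thesis by simp
  qed
  have bdd: "bdd_above A"
  proof (rule bdd_aboveI)
    fix a assume "a \<in> A"
    then obtain y where "\<forall>i\<in>I. y i \<in> Q i" "a = norm ((\<Sum>i\<in>I. lam i *\<^sub>R y i) - p)"
      unfolding A_def by blast
    thus "a \<le> L * B + norm p" using bnd by simp
  qed
  define s where "s = Sup A"
  have "s - \<delta>/2 < s" using dp by simp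
  then obtain a where "a \<in> A" "s - \<delta>/2 < a" unfolding s_def using less_cSup_iff[OF Ane bdd] by blast
  then obtain w where w: "\<forall>i\<in>I. w i \<in> Q i" and ws: "s - \<delta>/2 < norm ((\<Sum>i\<in>I. lam i *\<^sub>R w i) - p)"
    unfolding A_def by blast
  define v where "v = (\<Sum>i\<in>I. lam i *\<^sub>R w i) - p"
  obtain f where bl: "bounded_linear f" and fab: "\<And>x. \<bar>f x\<bar> \<le> norm x" and fv: "f v = norm v"
    using hahn_banach_norming by blast
  interpret f: bounded_linear f by (rule bl)
  define d where "d = \<delta> / (2 * (L + 1))"
  have dpos: "d > 0" unfolding d_def using dp L0 by simp
  have Ld: "L * d \<le> \<delta>/2"
  proof -
    have "L * d = (\<delta>/2) * (L / (L+1))" unfolding d_def using L0 by (simp add: field_simps)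
    also have "\<dots> \<le> (\<delta>/2) * 1" using L0 dp by (intro mult_left_mono) auto
    finally show ?thesis by simp
  qed
  define Q' where "Q' i = Q i \<inter> {x\<in>C. f x \<in> ball (f (w i)) d}" for i
  have fsum: "f ((\<Sum>i\<in>I. lam i *\<^sub>R y i) - p) = (\<Sum>i\<in>I. lam i * f (y i)) - f p" for y
    by (simp add: f.diff f.sum f.scaleR)
  show ?thesis
  proof (intro exI conjI ballI)
    fix i assume i: "i \<in> I"
    show "openin T (Q' i)" unfolding Q'_def using Q[OF i] Tf[OF bl open_ball] by (intro openin_Int) auto
    show "Q' i \<subseteq> Q i" unfolding Q'_def by blast
    have "w i \<in> C" using w i TC Q by blast
    thus "Q' i \<noteq> {}" unfolding Q'_def using w i dpos by auto
  next
    show "\<forall>y. (\<forall>i\<in>I. y i \<in> Q' i) \<longrightarrow>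
        s - \<delta> \<le> norm ((\<Sum>i\<in>I. lam i *\<^sub>R y i) - p) \<and> norm ((\<Sum>i\<in>I. lam i *\<^sub>R y i) - p) \<le> s"
    proof (intro allI impI conjI)
      fix y assume y: "\<forall>i\<in>I. y i \<in> Q' i"
      hence yO: "\<forall>i\<in>I. y i \<in> Q i" unfolding Q'_def by blast
      show "norm ((\<Sum>i\<in>I. lam i *\<^sub>R y i) - p) \<le> s"
        unfolding s_def
      proof (rule cSup_upper[OF _ bdd])
        show "norm ((\<Sum>i\<in>I. lam i *\<^sub>R y i) - p) \<in> A" unfolding A_def using yO by blast
      qed
      have close: "\<bar>f (y i) - f (w i)\<bar> < d" if "i \<in> I" for i
        using y that unfolding Q'_def by (auto simp: dist_real_def abs_minus_commute)
      have "\<bar>(\<Sum>i\<in>I. lam i * f (y i)) - (\<Sum>i\<in>I. lam i * f (w i))\<bar> = \<bar>\<Sum>i\<in>I. lam i * (f (y i) - f (w i))\<bar>"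
        by (simp add: sum_subtractf right_diff_distrib)
      also have "\<dots> \<le> (\<Sum>i\<in>I. \<bar>lam i * (f (y i) - f (w i))\<bar>)" by (rule sum_abs)
      also have "\<dots> \<le> (\<Sum>i\<in>I. \<bar>lam i\<bar> * d)"
      proof (rule sum_mono)
        fix i assume "i \<in> I"
        have "\<bar>lam i * (f (y i) - f (w i))\<bar> = \<bar>lam i\<bar> * \<bar>f (y i) - f (w i)\<bar>" by (rule abs_mult)
        also have "\<dots> \<le> \<bar>lam i\<bar> * d" using close[OF \<open>i \<in> I\<close>] by (intro mult_left_mono) auto
        finally show "\<bar>lam i * (f (y i) - f (w i))\<bar> \<le> \<bar>lam i\<bar> * d" .
      qed
      also have "\<dots> = L * d" unfolding L_def by (simp add: sum_distrib_right)
      finally have dd: "\<bar>(\<Sum>i\<in>I. lam i * f (y i)) - (\<Sum>i\<in>I. lam i * f (w i))\<bar> \<le> \<delta>/2" using Ld by simp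
      have "norm v = (\<Sum>i\<in>I. lam i * f (w i)) - f p" using fv fsum[of w] v_def by simp
      moreover have "f ((\<Sum>i\<in>I. lam i *\<^sub>R y i) - p) \<le> norm ((\<Sum>i\<in>I. lam i *\<^sub>R y i) - p)"
        using fab abs_le_D1 by blast
      moreover have "s - \<delta>/2 < norm v" using ws v_def by simp
      moreover have "-(\<delta>/2) \<le> (\<Sum>i\<in>I. lam i * f (y i)) - (\<Sum>i\<in>I. lam i * f (w i))"
        using abs_le_D2[OF dd] by linarith
      ultimately show "s - \<delta> \<le> norm ((\<Sum>i\<in>I. lam i *\<^sub>R y i) - p)"
        using fsum[of y] by linarith
    qed
  qed
qed

lemma iter:
  fixes T :: "'a::real_normed_vector topology"
  assumes fin: "finite I"
    and Tf: "\<And>(f::'a\<Rightarrow>real) U. bounded_linear f \<Longrightarrow> open U \<Longrightarrow> openin T {x\<in>C. f x \<in> U}"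
    and TC: "\<And>S. openin T S \<Longrightarrow> S \<subseteq> C"
    and B: "\<And>y. y \<in> C \<Longrightarrow> norm y \<le> B"
    and Q: "\<And>i. i\<in>I \<Longrightarrow> openin T (Q i) \<and> Q i \<noteq> {}"
    and dp: "\<delta> > 0"
    and S: "finite S"
  shows "\<exists>Q'. (\<forall>i\<in>I. openin T (Q' i) \<and> Q' i \<noteq> {} \<and> Q' i \<subseteq> Q i) \<and>
     (\<forall>(lam,p)\<in>S. \<exists>s. \<forall>y. (\<forall>i\<in>I. y i \<in> Q' i) \<longrightarrow>
        s - \<delta> \<le> norm ((\<Sum>i\<in>I. lam i *\<^sub>R y i) - p) \<and> norm ((\<Sum>i\<in>I. lam i *\<^sub>R y i) - p) \<le> s)"
  using S
proof (induction S rule: finite_induct)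
  case empty
  show ?case using Q by (intro exI[of _ Q]) auto
next
  case (insert q S)
  then obtain Q1 where Q1: "\<forall>i\<in>I. openin T (Q1 i) \<and> Q1 i \<noteq> {} \<and> Q1 i \<subseteq> Q i"
    and P1: "\<forall>(lam,p)\<in>S. \<exists>s. \<forall>y. (\<forall>i\<in>I. y i \<in> Q1 i) \<longrightarrow>
        s - \<delta> \<le> norm ((\<Sum>i\<in>I. lam i *\<^sub>R y i) - p) \<and> norm ((\<Sum>i\<in>I. lam i *\<^sub>R y i) - p) \<le> s"
    by blast
  obtain lq pq where q: "q = (lq, pq)" by (cases q)
  have Q1': "\<And>i. i\<in>I \<Longrightarrow> openin T (Q1 i) \<and> Q1 i \<noteq> {}" using Q1 by blast
  have kk: "\<exists>Q'. (\<forall>i\<in>I. openin T (Q' i) \<and> Q' i \<noteq> {} \<and> Q' i \<subseteq> Q1 i) \<and>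
     (\<exists>s. \<forall>y. (\<forall>i\<in>I. y i \<in> Q' i) \<longrightarrow>
        s - \<delta> \<le> norm ((\<Sum>i\<in>I. lq i *\<^sub>R y i) - pq) \<and> norm ((\<Sum>i\<in>I. lq i *\<^sub>R y i) - pq) \<le> s)"
    by (rule key) (fact fin Tf TC B Q1' dp)+
  obtain Q2 where Q2: "\<forall>i\<in>I. openin T (Q2 i) \<and> Q2 i \<noteq> {} \<and> Q2 i \<subseteq> Q1 i"
    and P2: "\<exists>s. \<forall>y. (\<forall>i\<in>I. y i \<in> Q2 i) \<longrightarrow>
        s - \<delta> \<le> norm ((\<Sum>i\<in>I. lq i *\<^sub>R y i) - pq) \<and> norm ((\<Sum>i\<in>I. lq i *\<^sub>R y i) - pq) \<le> s"
    using kk by blast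
  show ?case
  proof (intro exI[of _ Q2] conjI)
    show "\<forall>i\<in>I. openin T (Q2 i) \<and> Q2 i \<noteq> {} \<and> Q2 i \<subseteq> Q i" using Q1 Q2 by blast
    have sub: "\<forall>i\<in>I. y i \<in> Q1 i" if "\<forall>i\<in>I. y i \<in> Q2 i" for y using that Q2 by blast
    show "\<forall>(lam,p)\<in>insert q S. \<exists>s. \<forall>y. (\<forall>i\<in>I. y i \<in> Q2 i) \<longrightarrow>
        s - \<delta> \<le> norm ((\<Sum>i\<in>I. lam i *\<^sub>R y i) - p) \<and> norm ((\<Sum>i\<in>I. lam i *\<^sub>R y i) - p) \<le> s"
    proof (clarify)
      fix lam p assume "(lam, p) \<in> insert q S"
      then consider "(lam,p) = (lq,pq)" | "(lam,p) \<in> S" using q by blast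
      thus "\<exists>s. \<forall>y. (\<forall>i\<in>I. y i \<in> Q2 i) \<longrightarrow>
        s - \<delta> \<le> norm ((\<Sum>i\<in>I. lam i *\<^sub>R y i) - p) \<and> norm ((\<Sum>i\<in>I. lam i *\<^sub>R y i) - p) \<le> s"
      proof cases
        case 1 thus ?thesis using P2 by simp
      next
        case 2
        then obtain s where "\<forall>y. (\<forall>i\<in>I. y i \<in> Q1 i) \<longrightarrow>
          s - \<delta> \<le> norm ((\<Sum>i\<in>I. lam i *\<^sub>R y i) - p) \<and> norm ((\<Sum>i\<in>I. lam i *\<^sub>R y i) - p) \<le> s"
          using P1 by blast
        thus ?thesis using sub by blast
      qed
    qed
  qed
qed

lemma approx:
  fixes y :: "nat \<Rightarrow> 'a::real_normed_vector"
  assumes "\<forall>i\<in>I. \<bar>mu i - lam i\<bar> \<le> e" "\<forall>i\<in>I. norm (y i) \<le> B" "B \<ge> 0"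
  shows "norm ((\<Sum>i\<in>I. mu i *\<^sub>R y i) - (\<Sum>i\<in>I. lam i *\<^sub>R y i)) \<le> real (card I) * (e * B)"
proof -
  have "norm ((\<Sum>i\<in>I. mu i *\<^sub>R y i) - (\<Sum>i\<in>I. lam i *\<^sub>R y i)) = norm (\<Sum>i\<in>I. (mu i - lam i) *\<^sub>R y i)"
    by (simp add: sum_subtractf scaleR_diff_left)
  also have "\<dots> \<le> (\<Sum>i\<in>I. norm ((mu i - lam i) *\<^sub>R y i))" by (rule norm_sum)
  also have "\<dots> \<le> real (card I) * (e * B)"
    by (rule sum_bounded_above) (use assms in \<open>auto intro!: mult_mono\<close>)
  finally show ?thesis .
qed



lemma tri: "norm (u - p) \<le> norm (v - p) + norm (u - v)" for u v p :: "'a::real_normed_vector"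
  using norm_triangle_ineq[of "v - p" "u - v"] by simp

theorem lemma2p5:
  fixes D C :: "'a::banach set" and \<tau> :: "'a topology"
    and \<epsilon> :: real and n k :: nat and x :: "nat \<Rightarrow> 'a"
    and Ot :: "nat \<Rightarrow> 'a set"
  assumes "closed D" and "bounded D" and "convex D"
    and "topspace \<tau> = D"
    and "locally_convex_topology \<tau>"
    and "\<And>U. openin (subtopology weak_topology D) U \<Longrightarrow> openin \<tau> U"
    and "convex C" and "C \<subseteq> D"
    and "\<epsilon> > 0" and "n \<ge> 1" and "k \<ge> 1"
    and "\<And>i. i \<in> {1..n} \<Longrightarrow> openin (subtopology \<tau> C) (Ot i) \<and> Ot i \<noteq> {}"
  shows "\<exists>Os :: nat \<Rightarrow> 'a set.
           (\<forall>i\<in>{1..n}. openin (subtopology \<tau> C) (Os i) \<and> Os i \<noteq> {} \<and> Os i \<subseteq> Ot i) \<and>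
           (\<forall>lam\<in>simplex_pos n.
              diameter (scaled_msum n lam Os)
                \<le> 2 * setdist (x ` {1..k}) (scaled_msum n lam Os) + \<epsilon>)"
proof -
  let ?T = "subtopology \<tau> C"
  have Tf: "openin ?T {x\<in>C. f x \<in> U}" if f: "bounded_linear f" "open U" for f :: "'a \<Rightarrow> real" and U
  proof -
    have "openin weak_topology {x. f x \<in> U}" unfolding weak_topology_def
      by (rule topology_generated_by_Basis) (use f in blast)
    hence "openin (subtopology weak_topology D) ({x. f x \<in> U} \<inter> D)"
      by (auto simp: openin_subtopology)
    hence "openin \<tau> ({x. f x \<in> U} \<inter> D)" by (rule assms(6))
    hence "openin ?T ({x. f x \<in> U} \<inter> D \<inter> C)" by (auto simp: openin_subtopology)
    moreover have "{x. f x \<in> U} \<inter> D \<inter> C = {x\<in>C. f x \<in> U}" using assms(8) by blast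
    ultimately show ?thesis by simp
  qed
  have TC: "S \<subseteq> C" if "openin ?T S" for S using openin_imp_subset[OF that] .
  obtain B where Bp: "B > 0" and BD: "\<forall>y\<in>D. norm y \<le> B" using assms(2) bounded_pos by blast
  have BC: "norm y \<le> B" if "y \<in> C" for y using BD assms(8) that by blast
  obtain N :: nat where N: "8 * real n * B / \<epsilon> < real N" using reals_Archimedean2 by blast
  have npos: "real n \<ge> 1" using assms(10) by simp
  have "0 < 8 * real n * B / \<epsilon>" using npos Bp assms(9) by simp
  hence Npos: "real N > 0" using N by linarith
  have eta: "real n * (1 / real N * B) \<le> \<epsilon>/8"
  proof -
    have "8 * real n * B < real N * \<epsilon>" using N assms(9) by (simp add: field_simps)
    thus ?thesis using Npos by (simp add: field_simps)
  qed
  define net where "net = (\<lambda>m. \<lambda>i. if i \<in> {1..n} then real (m i) / real N else 0) ` (PiE {1..n} (\<lambda>_. {0..N}))"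
  have "finite net" unfolding net_def by (intro finite_imageI finite_PiE) auto
  define S where "S = net \<times> (x ` {1..k})"
  have finS: "finite S" unfolding S_def using \<open>finite net\<close> by simp
  have e4: "\<epsilon>/4 > 0" using assms(9) by simp
  obtain Os where Os: "\<forall>i\<in>{1..n}. openin ?T (Os i) \<and> Os i \<noteq> {} \<and> Os i \<subseteq> Ot i"
    and P: "\<forall>(lam,p)\<in>S. \<exists>s. \<forall>y. (\<forall>i\<in>{1..n}. y i \<in> Os i) \<longrightarrow>
        s - \<epsilon>/4 \<le> norm ((\<Sum>i\<in>{1..n}. lam i *\<^sub>R y i) - p) \<and> norm ((\<Sum>i\<in>{1..n}. lam i *\<^sub>R y i) - p) \<le> s"
    using iter[of "{1..n}" ?T C B Ot "\<epsilon>/4" S] Tf TC BC assms(12) e4 finS by auto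
  show ?thesis
  proof (rule exI[of _ Os], rule conjI[OF Os], rule ballI)
    fix mu assume mu: "mu \<in> simplex_pos n"
    have mu0: "\<forall>i\<in>{1..n}. 0 \<le> mu i" and mu1: "(\<Sum>i\<in>{1..n}. mu i) = 1"
      using mu unfolding simplex_pos_def by auto
    have mule: "mu i \<le> 1" if "i \<in> {1..n}" for i
      using member_le_sum[of i "{1..n}" mu] that mu0 mu1 by auto
    define mm where "mm = restrict (\<lambda>i. nat \<lfloor>real N * mu i\<rfloor>) {1..n}"
    have mmP: "mm \<in> PiE {1..n} (\<lambda>_. {0..N})"
    proof -
      have "nat \<lfloor>real N * mu i\<rfloor> \<le> N" if "i \<in> {1..n}" for i
      proof -
        have "real N * mu i \<le> real N" using mule[OF that] Npos by simp
        hence "\<lfloor>real N * mu i\<rfloor> \<le> int N" by (simp add: floor_le_iff)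
        thus ?thesis by simp
      qed
      thus ?thesis unfolding mm_def by auto
    qed
    define lam where "lam = (\<lambda>i. if i \<in> {1..n} then real (mm i) / real N else 0)"
    have lamnet: "lam \<in> net" unfolding net_def lam_def using mmP by blast
    have lamclose: "\<forall>i\<in>{1..n}. \<bar>mu i - lam i\<bar> \<le> 1 / real N"
    proof
      fix i assume i: "i \<in> {1..n}"
      have nn: "0 \<le> real N * mu i" using mu0 i Npos by simp
      hence fl0: "0 \<le> \<lfloor>real N * mu i\<rfloor>" by simp
      have li: "lam i = of_int \<lfloor>real N * mu i\<rfloor> / real N"
        unfolding lam_def mm_def using i fl0 by simp
      have f1: "of_int \<lfloor>real N * mu i\<rfloor> \<le> real N * mu i" by (rule of_int_floor_le)
      have f2: "real N * mu i < of_int \<lfloor>real N * mu i\<rfloor> + 1" by (rule real_of_int_floor_add_one_gt)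
      define fl where "fl = (of_int \<lfloor>real N * mu i\<rfloor> :: real)"
      have eq: "mu i - lam i = (real N * mu i - fl) / real N"
        unfolding li fl_def using Npos by (simp add: diff_divide_distrib)
      have r0: "0 \<le> real N * mu i - fl" using f1 unfolding fl_def by linarith
      have r1: "real N * mu i - fl \<le> 1" using f2 unfolding fl_def by linarith
      have "(real N * mu i - fl) / real N \<le> 1 / real N" using r1 Npos by (intro divide_right_mono) auto
      moreover have "0 \<le> (real N * mu i - fl) / real N" using r0 Npos by simp
      ultimately show "\<bar>mu i - lam i\<bar> \<le> 1 / real N" unfolding eq by simp
    qed
    let ?A = "scaled_msum n mu Os"
    have Ane: "?A \<noteq> {}"
    proof -
      have "\<forall>i\<in>{1..n}. (SOME z. z \<in> Os i) \<in> Os i" using Os by (simp add: some_in_eq)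
      hence "\<exists>y. \<forall>i\<in>{1..n}. y i \<in> Os i" by (rule exI[of _ "\<lambda>i. SOME z. z \<in> Os i"])
      then obtain y0 where y0: "\<forall>i\<in>{1..n}. y0 i \<in> Os i" by blast
      have "(\<Sum>i\<in>{1..n}. mu i *\<^sub>R y0 i) \<in> ?A" unfolding scaled_msum_def using y0 by blast
      thus ?thesis by blast
    qed
    have Xne: "x ` {1..k} \<noteq> {}" using assms(11) by auto
    have mainineq: "norm (a - b) \<le> 2 * dist p z + \<epsilon>"
      if ab: "a \<in> ?A" "b \<in> ?A" and pz: "p \<in> x ` {1..k}" "z \<in> ?A" for a b p z
    proof -
      obtain ya where ya: "\<forall>i\<in>{1..n}. ya i \<in> Os i" "a = (\<Sum>i\<in>{1..n}. mu i *\<^sub>R ya i)"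
        using ab(1) unfolding scaled_msum_def by blast
      obtain yb where yb: "\<forall>i\<in>{1..n}. yb i \<in> Os i" "b = (\<Sum>i\<in>{1..n}. mu i *\<^sub>R yb i)"
        using ab(2) unfolding scaled_msum_def by blast
      obtain yz where yz: "\<forall>i\<in>{1..n}. yz i \<in> Os i" "z = (\<Sum>i\<in>{1..n}. mu i *\<^sub>R yz i)"
        using pz(2) unfolding scaled_msum_def by blast
      have "(lam, p) \<in> S" unfolding S_def using lamnet pz(1) by blast
      then obtain s where s: "\<forall>y. (\<forall>i\<in>{1..n}. y i \<in> Os i) \<longrightarrow>
        s - \<epsilon>/4 \<le> norm ((\<Sum>i\<in>{1..n}. lam i *\<^sub>R y i) - p) \<and> norm ((\<Sum>i\<in>{1..n}. lam i *\<^sub>R y i) - p) \<le> s"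
        using P by blast
      have ap: "norm ((\<Sum>i\<in>{1..n}. mu i *\<^sub>R y i) - (\<Sum>i\<in>{1..n}. lam i *\<^sub>R y i)) \<le> \<epsilon>/8"
        if "\<forall>i\<in>{1..n}. y i \<in> Os i" for y
      proof -
        have "\<forall>i\<in>{1..n}. norm (y i) \<le> B" using that Os TC BC by blast
        from approx[OF lamclose this] Bp
        have "norm ((\<Sum>i\<in>{1..n}. mu i *\<^sub>R y i) - (\<Sum>i\<in>{1..n}. lam i *\<^sub>R y i)) \<le> real n * (1 / real N * B)"
          by simp
        thus ?thesis using eta by linarith
      qed
      have ap': "norm ((\<Sum>i\<in>{1..n}. lam i *\<^sub>R y i) - (\<Sum>i\<in>{1..n}. mu i *\<^sub>R y i)) \<le> \<epsilon>/8"
        if "\<forall>i\<in>{1..n}. y i \<in> Os i" for y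
        using ap[OF that] by (simp add: norm_minus_commute)
      have "norm (a - p) \<le> s + \<epsilon>/8"
        using tri[of a p "\<Sum>i\<in>{1..n}. lam i *\<^sub>R ya i"] s ya ap[OF ya(1)] by force
      moreover have "norm (b - p) \<le> s + \<epsilon>/8"
        using tri[of b p "\<Sum>i\<in>{1..n}. lam i *\<^sub>R yb i"] s yb ap[OF yb(1)] by force
      moreover have "s - \<epsilon>/4 - \<epsilon>/8 \<le> norm (z - p)"
        using tri[of "\<Sum>i\<in>{1..n}. lam i *\<^sub>R yz i" p z] s yz ap'[OF yz(1)] by force
      moreover have "norm (a - b) \<le> norm (a - p) + norm (b - p)"
        using norm_triangle_ineq4[of "a - p" "b - p"] by simp
      moreover have "dist p z = norm (z - p)" by (simp add: dist_norm norm_minus_commute)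
      ultimately show ?thesis by linarith
    qed
    show "diameter ?A \<le> 2 * setdist (x ` {1..k}) ?A + \<epsilon>"
    proof (rule diameter_le)
      show "?A \<noteq> {} \<or> 0 \<le> 2 * setdist (x ` {1..k}) ?A + \<epsilon>" using Ane by blast
    next
      fix a b assume "a \<in> ?A" "b \<in> ?A"
      have "(norm (a - b) - \<epsilon>) / 2 \<le> setdist (x ` {1..k}) ?A"
        unfolding le_setdist_iff using mainineq[OF \<open>a \<in> ?A\<close> \<open>b \<in> ?A\<close>] Xne Ane by fastforce
      thus "norm (a - b) \<le> 2 * setdist (x ` {1..k}) ?A + \<epsilon>" by simp
    qed
  qed
qed

end
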